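(* In the setting below, for every $0<\alpha<d-1$, $$\sum_jr_j^{d-1+\alpha}\le C\tau^\alpha,$$ where $C$ depends only on $\alpha,\gamma,d,\Omega$ (and the $L^{p,\infty}$ bound of $(\varkappa\circ n)^{-1}$), not on $\tau$.
   Context: Let $\Omega\subset\mathbb{R}^d$ be a bounded smooth domain, fix $\mu>0$, and assume $(\varkappa\circ n)^{-1}\in L^{p,\infty}(\partial\Omega,d\sigma)$ for some $p\in(0,d-1]$, i.e. $\sup_{t>0}t^p\sigma\{x\in\partial\Omega:\varkappa(n(x))^{-1}>t\}<\infty$; here $n$ is the outer unit normal, $\sigma$ surface measure, and $\varkappa(n)=\inf_{\xi\in\mathbb{Z}^d\setminus\{0\}}|(I-n\otimes n)\xi||\xi|^\mu$. Put $\gamma=(d-1)/p$ and $F=\varkappa(n(\cdot))^{1/\gamma}$. Fix $x_0\in\partial\Omega$, $r_0>0$ small; let $P(x)=x-((x-x_0)\cdot n(x_0))n(x_0)$ be the projection onto the tangent plane $T$ at $x_0$, a bijection from a neighborhood of $x_0$ in $\partial\Omega$ onto a region of $T$ containing $6Q_0$, where $Q_0\subset T$ is a cube with $B(x_0,2r_0)\cap\partial\Omega\subset P^{-1}(Q_0)\subset B(x_0,4r_0\sqrt d)\cap\partial\Omega$. For small $\tau>0$, $\{Q_j\}$ with side lengths $r_j$ are the maximal dyadic subcubes $Q$ of $Q_0$ satisfying $\|F\circ P^{-1}\|_{L^\infty(6Q)}\le\tau/\ell(Q)$; they form a finite partition of $Q_0$ with pairwise disjoint interiors. *)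

theory Defs
  imports "HOL-Analysis.Analysis"
begin

coinductive smooth_on :: "'a::euclidean_space set \<Rightarrow> ('a \<Rightarrow> real) \<Rightarrow> bool" where
  "continuous_on U f \<Longrightarrow>
   (\<forall>b\<in>Basis. \<exists>g. (\<forall>x\<in>U. ((\<lambda>t. f (x + t *\<^sub>R b)) has_real_derivative g x) (at 0))
                 \<and> smooth_on U g) \<Longrightarrow> smooth_on U f"

definition smooth_boundary_normal :: "'a::euclidean_space set \<Rightarrow> ('a \<Rightarrow> 'a) \<Rightarrow> bool" where
  "smooth_boundary_normal \<Omega> n \<longleftrightarrow>
     (\<forall>x\<in>frontier \<Omega>. \<exists>U \<rho> G. open U \<and> x \<in> U \<and> smooth_on U \<rho> \<and>
        (\<forall>y\<in>U. (\<rho> has_derivative (\<lambda>h. G y \<bullet> h)) (at y) \<and> G y \<noteq> 0) \<and>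
        \<Omega> \<inter> U = {y\<in>U. \<rho> y < 0} \<and>
        (\<forall>y\<in>U \<inter> frontier \<Omega>. n y = (1 / norm (G y)) *\<^sub>R G y))"

definition hausdorff_normalization :: "real \<Rightarrow> real" where
  "hausdorff_normalization s = pi powr (s / 2) / Gamma (s / 2 + 1)"

definition hausdorff_content :: "real \<Rightarrow> real \<Rightarrow> 'a::metric_space set \<Rightarrow> ennreal" where
  "hausdorff_content s \<delta> A =
     (INF C\<in>{C :: nat \<Rightarrow> 'a set. A \<subseteq> (\<Union>i. C i) \<and> (\<forall>i. bounded (C i) \<and> diameter (C i) \<le> \<delta>)}.
        (\<Sum>i. ennreal (hausdorff_normalization s * (diameter (C i) / 2) powr s)))"

text \<open>s-dimensional Hausdorff (outer) measure; for s = d-1 on a smooth hypersurface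
  this is the surface measure, and on a hyperplane it is (d-1)-dim Lebesgue measure.\<close>

definition hausdorff_measure :: "real \<Rightarrow> 'a::metric_space set \<Rightarrow> ennreal" where
  "hausdorff_measure s A = (SUP \<delta>\<in>{0<..}. hausdorff_content s \<delta> A)"

definition int_lattice :: "'a::euclidean_space set" where
  "int_lattice = {\<xi>. \<forall>b\<in>Basis. \<xi> \<bullet> b \<in> \<int>}"

definition kappa :: "real \<Rightarrow> 'a::euclidean_space \<Rightarrow> real" where
  "kappa \<mu> \<nu> = Inf {norm (\<xi> - (\<nu> \<bullet> \<xi>) *\<^sub>R \<nu>) * norm \<xi> powr \<mu> | \<xi>. \<xi> \<in> int_lattice \<and> \<xi> \<noteq> 0}"

definition tproj :: "'a::euclidean_space \<Rightarrow> 'a \<Rightarrow> 'a \<Rightarrow> 'a" where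
  "tproj x0 \<nu> x = x - ((x - x0) \<bullet> \<nu>) *\<^sub>R \<nu>"

definition cube :: "(nat \<Rightarrow> 'a::euclidean_space) \<Rightarrow> nat \<Rightarrow> 'a \<Rightarrow> real \<Rightarrow> 'a set" where
  "cube e m c l = {c + (\<Sum>i<m. t i *\<^sub>R e i) | t. \<forall>i<m. \<bar>t i\<bar> \<le> l / 2}"

text \<open>Dyadic subcubes of the cube Q0 = cube e m c0 l0, indexed by generation k and
  multi-index j (with j i < 2^k for i < m and j i = 0 otherwise).\<close>

definition dyadic_index :: "nat \<Rightarrow> nat \<times> (nat \<Rightarrow> nat) \<Rightarrow> bool" where
  "dyadic_index m q \<longleftrightarrow> (\<forall>i. (i < m \<longrightarrow> snd q i < 2 ^ fst q) \<and> (m \<le> i \<longrightarrow> snd q i = 0))"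

definition dyadic_side :: "real \<Rightarrow> nat \<times> (nat \<Rightarrow> nat) \<Rightarrow> real" where
  "dyadic_side l0 q = l0 / 2 ^ fst q"

definition dyadic_centre :: "(nat \<Rightarrow> 'a::euclidean_space) \<Rightarrow> nat \<Rightarrow> 'a \<Rightarrow> real \<Rightarrow> nat \<times> (nat \<Rightarrow> nat) \<Rightarrow> 'a" where
  "dyadic_centre e m c0 l0 q =
     c0 + (\<Sum>i<m. ((real (snd q i) + 1/2) * dyadic_side l0 q - l0 / 2) *\<^sub>R e i)"

definition dyadic_cube :: "(nat \<Rightarrow> 'a::euclidean_space) \<Rightarrow> nat \<Rightarrow> 'a \<Rightarrow> real \<Rightarrow> real \<Rightarrow> nat \<times> (nat \<Rightarrow> nat) \<Rightarrow> 'a set" where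
  "dyadic_cube e m c0 l0 a q = cube e m (dyadic_centre e m c0 l0 q) (a * dyadic_side l0 q)"

text \<open>Stopping condition  ||G||_{L^\<infinity>(6Q)} \<le> \<tau> / l(Q), where the L^\<infinity> norm is with respect
  to (m-dimensional) Lebesgue = Hausdorff measure on the tangent plane.\<close>

definition good_cube :: "(nat \<Rightarrow> 'a::euclidean_space) \<Rightarrow> nat \<Rightarrow> 'a \<Rightarrow> real \<Rightarrow> ('a \<Rightarrow> real) \<Rightarrow> real \<Rightarrow> nat \<times> (nat \<Rightarrow> nat) \<Rightarrow> bool" where
  "good_cube e m c0 l0 G \<tau> q \<longleftrightarrow>
     hausdorff_measure (real m) {y \<in> dyadic_cube e m c0 l0 6 q. \<bar>G y\<bar> > \<tau> / dyadic_side l0 q} = 0"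

definition maximal_good_cubes :: "(nat \<Rightarrow> 'a::euclidean_space) \<Rightarrow> nat \<Rightarrow> 'a \<Rightarrow> real \<Rightarrow> ('a \<Rightarrow> real) \<Rightarrow> real \<Rightarrow> (nat \<times> (nat \<Rightarrow> nat)) set" where
  "maximal_good_cubes e m c0 l0 G \<tau> =
     {q. dyadic_index m q \<and> good_cube e m c0 l0 G \<tau> q \<and>
         \<not> (\<exists>q'. dyadic_index m q' \<and> good_cube e m c0 l0 G \<tau> q' \<and>
                 dyadic_cube e m c0 l0 1 q \<subset> dyadic_cube e m c0 l0 1 q')}"

end

theory Submission
  imports Defs
begin
definition hcovers :: "real \<Rightarrow> 'a::metric_space set \<Rightarrow> (nat \<Rightarrow> 'a set) set" where
  "hcovers \<delta> A = {C :: nat \<Rightarrow> 'a set. A \<subseteq> (\<Union>i. C i) \<and> (\<forall>i. bounded (C i) \<and> diameter (C i) \<le> \<delta>)}"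

definition hsum :: "real \<Rightarrow> (nat \<Rightarrow> 'a::metric_space set) \<Rightarrow> ennreal" where
  "hsum s C = (\<Sum>i. ennreal (hausdorff_normalization s * (diameter (C i) / 2) powr s))"

lemma content_def': "hausdorff_content s \<delta> A = (INF C\<in>hcovers \<delta> A. hsum s C)"
  unfolding hausdorff_content_def hcovers_def hsum_def by simp

lemma content_mono: "A \<subseteq> B \<Longrightarrow> hausdorff_content s \<delta> A \<le> hausdorff_content s \<delta> B"
  unfolding content_def' by (rule INF_superset_mono) (auto simp: hcovers_def)

lemma content_le_measure: "hausdorff_content s 1 A \<le> hausdorff_measure s A"
  unfolding hausdorff_measure_def by (rule SUP_upper) auto

lemma normalization_nonneg: "0 \<le> s \<Longrightarrow> 0 \<le> hausdorff_normalization s"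
  unfolding hausdorff_normalization_def
  by (intro divide_nonneg_pos) (auto intro!: Gamma_real_pos)

lemma lip_bounded:
  assumes lip: "\<And>x y. dist (f x) (f y) \<le> dist x y" and "bounded C"
  shows "bounded (f ` C)"
proof -
  from assms(2) obtain a r where "C \<subseteq> cball a r" using bounded_subset_cball by blast
  then have "f ` C \<subseteq> cball (f a) r" using lip by (auto simp: subset_iff) (meson order_trans)
  then show ?thesis using bounded_cball bounded_subset by blast
qed

lemma lip_diameter:
  fixes f :: "'a::real_normed_vector \<Rightarrow> 'b::real_normed_vector"
  assumes lip: "\<And>x y. dist (f x) (f y) \<le> dist x y" and "bounded C"
  shows "diameter (f ` C) \<le> diameter C"
proof (cases "C = {}")
  case True then show ?thesis by simp
next
  case False
  show ?thesis
  proof (rule diameter_le)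
    show "f ` C \<noteq> {} \<or> 0 \<le> diameter C" using False by simp
    fix x y assume "x \<in> f ` C" "y \<in> f ` C"
    then obtain u v where "u \<in> C" "v \<in> C" "x = f u" "y = f v" by auto
    then show "norm (x - y) \<le> diameter C"
      using lip[of u v] diameter_bounded_bound[OF assms(2), of u v] by (simp add: dist_norm)
  qed
qed

lemma content_lip:
  fixes f :: "'a::real_normed_vector \<Rightarrow> 'b::real_normed_vector"
  assumes lip: "\<And>x y. dist (f x) (f y) \<le> dist x y" and "0 \<le> s"
  shows "hausdorff_content s \<delta> (f ` A) \<le> hausdorff_content s \<delta> A"
  unfolding content_def'
proof (rule INF_greatest)
  fix C assume C: "C \<in> hcovers \<delta> A"
  let ?D = "\<lambda>i. f ` C i"
  have "?D \<in> hcovers \<delta> (f ` A)"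
    using C lip_bounded[OF lip] lip_diameter[OF lip] unfolding hcovers_def
    apply (auto simp: subset_iff)
     apply blast
    by (meson order_trans)
  then have "(INF C\<in>hcovers \<delta> (f ` A). hsum s C) \<le> hsum s ?D" by (rule INF_lower)
  also have "\<dots> \<le> hsum s C"
    unfolding hsum_def
  proof (intro suminf_le allI ennreal_leI mult_left_mono powr_mono2)
    fix i
    show "diameter (f ` C i) / 2 \<le> diameter (C i) / 2"
      using C lip_diameter[OF lip] by (auto simp: hcovers_def)
    have "bounded (f ` C i)" using lip_bounded[OF lip] C[unfolded hcovers_def] by auto
    then show "0 \<le> diameter (f ` C i) / 2" using diameter_ge_0 by simp
  qed (auto simp: normalization_nonneg assms)
  finally show "(INF C\<in>hcovers \<delta> (f ` A). hsum s C) \<le> hsum s C" .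
qed

lemma ennreal_sum_INF_le:
  fixes f :: "'j \<Rightarrow> 'c \<Rightarrow> ennreal"
  assumes J: "finite J" and K: "0 < K"
    and H: "\<And>CC. (\<forall>j\<in>J. CC j \<in> S j) \<Longrightarrow> x \<le> ennreal K * (\<Sum>j\<in>J. f j (CC j))"
  shows "x \<le> ennreal K * (\<Sum>j\<in>J. (INF c\<in>S j. f j c))"
proof (cases "\<exists>j\<in>J. (INF c\<in>S j. f j c) = \<infinity>")
  case True
  then obtain j0 where j0: "j0 \<in> J" "(INF c\<in>S j0. f j0 c) = \<infinity>" by blast
  have "(INF c\<in>S j0. f j0 c) \<le> (\<Sum>j\<in>J. (INF c\<in>S j. f j c))"
    using J j0(1) by (intro member_le_sum) auto
  then have T: "(\<Sum>j\<in>J. (INF c\<in>S j. f j c)) = \<infinity>" using j0(2) by (simp add: top_unique)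
  show ?thesis using T K by (simp add: ennreal_mult_top)
next
  case False
  show ?thesis
  proof (rule ennreal_le_epsilon)
    fix e :: real assume e: "0 < e"
    define e' where "e' = e / ((K + 1) * (card J + 1))"
    have e': "0 < e'" unfolding e'_def using e K by (auto intro!: divide_pos_pos)
    have "\<forall>j\<in>J. \<exists>c\<in>S j. f j c < (INF c\<in>S j. f j c) + e'"
      using False e' by (auto intro!: INF_approx_ennreal)
    then obtain CC where CC: "\<forall>j\<in>J. CC j \<in> S j \<and> f j (CC j) < (INF c\<in>S j. f j c) + e'"
      by metis
    have "x \<le> ennreal K * (\<Sum>j\<in>J. f j (CC j))" using H CC by auto
    also have "\<dots> \<le> ennreal K * (\<Sum>j\<in>J. ((INF c\<in>S j. f j c) + e'))"
      using CC by (intro mult_left_mono sum_mono) (auto intro: less_imp_le)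
    also have "\<dots> = ennreal K * (\<Sum>j\<in>J. (INF c\<in>S j. f j c)) + ennreal (K * (card J * e'))"
      using K e' by (simp add: sum.distrib distrib_left ennreal_mult ennreal_of_nat_eq_real_of_nat)
    also have "\<dots> \<le> ennreal K * (\<Sum>j\<in>J. (INF c\<in>S j. f j c)) + ennreal e"
    proof -
      have "K * (card J * e') \<le> e"
      proof -
        have "K * (card J * e') = e * ((K * card J) / ((K + 1) * (card J + 1)))"
          unfolding e'_def by simp
        also have "\<dots> \<le> e * 1"
        proof (intro mult_left_mono)
          have "K * card J \<le> (K + 1) * (card J + 1)" using K by (intro mult_mono) auto
          then show "K * real (card J) / ((K + 1) * real (card J + 1)) \<le> 1"
            using K by (simp add: divide_le_eq_1)
        qed (use e in auto)
        finally show ?thesis by simp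
      qed
      then show ?thesis by (intro add_left_mono ennreal_leI)
    qed
    finally show "x \<le> ennreal K * (\<Sum>j\<in>J. (INF c\<in>S j. f j c)) + ennreal e" .
  qed
qed

locale frame =
  fixes bb :: "nat \<Rightarrow> 'a::euclidean_space" and m :: nat
  assumes bb: "bij_betw bb {..<Suc m} Basis"
begin

lemma bb_Basis: "i < Suc m \<Longrightarrow> bb i \<in> Basis"
  using bb by (auto simp: bij_betw_def)

lemma Basis_eq: "Basis = bb ` {..<Suc m}"
  using bb by (auto simp: bij_betw_def)

lemma bb_inner: "i < Suc m \<Longrightarrow> j < Suc m \<Longrightarrow> bb i \<bullet> bb j = (if i = j then 1 else 0)"
  using bb bb_Basis[of i] bb_Basis[of j] by (auto simp: inner_Basis bij_betw_def inj_on_def)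

definition vec :: "(nat \<Rightarrow> real) \<Rightarrow> 'a" where
  "vec f = (\<Sum>i<Suc m. f i *\<^sub>R bb i)"

lemma vec_inner: "k < Suc m \<Longrightarrow> vec f \<bullet> bb k = f k"
  unfolding vec_def inner_sum_left by (simp add: bb_inner if_distrib cong: if_cong)

lemma vec_repr: "z = vec (\<lambda>i. z \<bullet> bb i)"
proof -
  have "z = (\<Sum>b\<in>Basis. (z \<bullet> b) *\<^sub>R b)" by (simp add: euclidean_representation)
  also have "\<dots> = (\<Sum>i<Suc m. (z \<bullet> bb i) *\<^sub>R bb i)"
    using sum.reindex_bij_betw[OF bb, of "\<lambda>b. (z \<bullet> b) *\<^sub>R b"] by simp
  finally show ?thesis unfolding vec_def .
qed

lemma mem_box_vec: "z \<in> box (vec f) (vec g) \<longleftrightarrow> (\<forall>k<Suc m. f k < z \<bullet> bb k \<and> z \<bullet> bb k < g k)"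
  unfolding mem_box Basis_eq by (auto simp: vec_inner)

lemma mem_cbox_vec: "z \<in> cbox (vec f) (vec g) \<longleftrightarrow> (\<forall>k<Suc m. f k \<le> z \<bullet> bb k \<and> z \<bullet> bb k \<le> g k)"
  unfolding mem_box Basis_eq by (auto simp: vec_inner)

lemma measure_box_vec:
  assumes "\<And>k. k < Suc m \<Longrightarrow> f k \<le> g k"
  shows "emeasure lborel (box (vec f) (vec g)) = ennreal (\<Prod>k<Suc m. g k - f k)"
proof -
  have "emeasure lborel (box (vec f) (vec g)) = ennreal (prod ((\<bullet>) (vec g - vec f)) Basis)"
    by (rule emeasure_lborel_box) (auto simp: Basis_eq vec_inner assms)
  also have "prod ((\<bullet>) (vec g - vec f)) Basis = (\<Prod>k<Suc m. (vec g - vec f) \<bullet> bb k)"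
    using prod.reindex_bij_betw[OF bb, of "(\<bullet>) (vec g - vec f)"] by simp
  also have "\<dots> = (\<Prod>k<Suc m. g k - f k)"
    by (intro prod.cong) (auto simp: inner_diff_left vec_inner)
  finally show ?thesis .
qed

lemma measure_cbox_vec:
  assumes "\<And>k. k < Suc m \<Longrightarrow> f k \<le> g k"
  shows "emeasure lborel (cbox (vec f) (vec g)) = ennreal (\<Prod>k<Suc m. g k - f k)"
proof -
  have "emeasure lborel (cbox (vec f) (vec g)) = ennreal (prod ((\<bullet>) (vec g - vec f)) Basis)"
    by (rule emeasure_lborel_cbox) (auto simp: Basis_eq vec_inner assms)
  also have "prod ((\<bullet>) (vec g - vec f)) Basis = (\<Prod>k<Suc m. (vec g - vec f) \<bullet> bb k)"
    using prod.reindex_bij_betw[OF bb, of "(\<bullet>) (vec g - vec f)"] by simp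
  also have "\<dots> = (\<Prod>k<Suc m. g k - f k)"
    by (intro prod.cong) (auto simp: inner_diff_left vec_inner)
  finally show ?thesis .
qed

end

locale frame2 = frame bb m for bb :: "nat \<Rightarrow> 'a::euclidean_space" and m +
  fixes e :: "nat \<Rightarrow> 'a" and c0 :: 'a
  assumes e_orth: "\<And>i j. i < m \<Longrightarrow> j < m \<Longrightarrow> e i \<bullet> e j = (if i = j then 1 else 0)"
begin

lemma norm_e: "i < m \<Longrightarrow> norm (e i) = 1"
  using e_orth[of i i] by (simp add: norm_eq_sqrt_inner)

definition psi :: "'a \<Rightarrow> 'a" where
  "psi y = (\<Sum>i<m. (e i \<bullet> (y - c0)) *\<^sub>R bb i)"

lemma psi_pt: "psi y + t *\<^sub>R bb m = vec (\<lambda>i. if i < m then e i \<bullet> (y - c0) else t)"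
  unfolding psi_def vec_def by (simp add: sum.lessThan_Suc)

definition Slab :: "'a set \<Rightarrow> 'a set" where
  "Slab Y = {psi y + t *\<^sub>R bb m | y t. y \<in> Y \<and> \<bar>t\<bar> \<le> 1/2}"

definition BoxC :: "'a set \<Rightarrow> 'a set" where
  "BoxC C = (if C = {} then {} else
     cbox (vec (\<lambda>i. if i < m then e i \<bullet> ((SOME c. c \<in> C) - c0) - diameter C else -1/2))
          (vec (\<lambda>i. if i < m then e i \<bullet> ((SOME c. c \<in> C) - c0) + diameter C else 1/2)))"

lemma BoxC_sets: "BoxC C \<in> sets lborel"
  unfolding BoxC_def by auto

lemma Slab_sub_BoxC:
  assumes "bounded C"
  shows "Slab C \<subseteq> BoxC C"
proof
  fix z assume "z \<in> Slab C"
  then obtain y t where z: "z = psi y + t *\<^sub>R bb m" and y: "y \<in> C" and t: "\<bar>t\<bar> \<le> 1/2"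
    unfolding Slab_def by auto
  define c where "c = (SOME c. c \<in> C)"
  have c: "c \<in> C" unfolding c_def using y by (rule someI)
  have dyc: "norm (y - c) \<le> diameter C"
    using diameter_bounded_bound[OF assms y c] by (simp add: dist_norm)
  have "\<bar>e k \<bullet> (y - c)\<bar> \<le> diameter C" if "k < m" for k
    using Cauchy_Schwarz_ineq2[of "e k" "y - c"] norm_e[OF that] dyc by simp
  then have "e k \<bullet> (c - c0) - diameter C \<le> e k \<bullet> (y - c0) \<and> e k \<bullet> (y - c0) \<le> e k \<bullet> (c - c0) + diameter C" if "k < m" for k
    using that by (simp add: inner_diff_right abs_le_iff) (smt (verit))
  then show "z \<in> BoxC C"
    using y t unfolding BoxC_def z psi_pt c_def[symmetric]
    by (auto simp: mem_cbox_vec vec_inner abs_le_iff)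
qed

lemma BoxC_measure:
  assumes "bounded C"
  shows "emeasure lborel (BoxC C) \<le> ennreal ((2 * diameter C) ^ m)"
proof (cases "C = {}")
  case True then show ?thesis by (simp add: BoxC_def)
next
  case False
  have d: "0 \<le> diameter C" using diameter_ge_0[OF assms] .
  have "emeasure lborel (BoxC C) = ennreal (\<Prod>k<Suc m.
      (if k < m then e k \<bullet> ((SOME c. c \<in> C) - c0) + diameter C else 1/2) -
      (if k < m then e k \<bullet> ((SOME c. c \<in> C) - c0) - diameter C else -1/2))"
    unfolding BoxC_def if_not_P[OF False] using d by (subst measure_cbox_vec) auto
  also have "(\<Prod>k<Suc m.
      (if k < m then e k \<bullet> ((SOME c. c \<in> C) - c0) + diameter C else 1/2) -
      (if k < m then e k \<bullet> ((SOME c. c \<in> C) - c0) - diameter C else -1/2)) = (2 * diameter C) ^ m"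
    by (simp add: prod.lessThan_Suc)
  finally show ?thesis by simp
qed

definition Kc :: real where "Kc = 4 ^ m / hausdorff_normalization (real m)"

lemma normalization_pos: "0 < hausdorff_normalization (real m)"
  unfolding hausdorff_normalization_def by (intro divide_pos_pos) (auto intro!: Gamma_real_pos)

lemma Kc_pos: "0 < Kc"
  unfolding Kc_def using normalization_pos by simp

lemma term_bound:
  assumes "0 < m" "0 \<le> \<delta>"
  shows "ennreal ((2 * \<delta>) ^ m) \<le> ennreal Kc * ennreal (hausdorff_normalization (real m) * (\<delta> / 2) powr real m)"
proof -
  have "(\<delta> / 2) powr real m = (\<delta> / 2) ^ m"
  proof (cases "\<delta> = 0")
    case True then show ?thesis using assms by simp
  next
    case False then show ?thesis using assms by (simp add: powr_realpow)
  qed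
  have "Kc * (hausdorff_normalization (real m) * (\<delta> / 2) powr real m) = (2 * \<delta>) ^ m"
  proof -
    have "(2 * \<delta>) ^ m = (4 * (\<delta> / 2)) ^ m" by simp
    also have "\<dots> = 4 ^ m * (\<delta> / 2) ^ m" by (rule power_mult_distrib)
    finally have *: "(2 * \<delta>) ^ m = 4 ^ m * (\<delta> / 2) ^ m" .
    show ?thesis unfolding Kc_def * \<open>(\<delta> / 2) powr real m = (\<delta> / 2) ^ m\<close>
      using normalization_pos by simp
  qed
  moreover have "ennreal Kc * ennreal (hausdorff_normalization (real m) * (\<delta> / 2) powr real m)
      = ennreal (Kc * (hausdorff_normalization (real m) * (\<delta> / 2) powr real m))"
    using Kc_pos normalization_pos by (intro ennreal_mult[symmetric]) auto
  ultimately show ?thesis by simp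
qed

lemma slab_measure_bound:
  assumes m: "0 < m" and J: "finite J" and E: "E \<in> sets lborel" and ES: "E \<subseteq> Slab A"
    and AX: "A \<subseteq> (\<Union>j\<in>J. X j)"
  shows "emeasure lborel E \<le> ennreal Kc * (\<Sum>j\<in>J. hausdorff_content (real m) 1 (X j))"
  unfolding content_def'
proof (rule ennreal_sum_INF_le[OF J Kc_pos])
  fix CC assume CC: "\<forall>j\<in>J. CC j \<in> hcovers 1 (X j)"
  define U where "U j = (\<Union>i. BoxC (CC j i))" for j
  have U: "U j \<in> sets lborel" for j unfolding U_def using BoxC_sets by auto
  have "E \<subseteq> (\<Union>j\<in>J. U j)"
  proof
    fix z assume "z \<in> E"
    then obtain y t where z: "z = psi y + t *\<^sub>R bb m" and y: "y \<in> A" and t: "\<bar>t\<bar> \<le> 1/2"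
      using ES unfolding Slab_def by auto
    then obtain j where j: "j \<in> J" "y \<in> X j" using AX by auto
    then obtain i where i: "y \<in> CC j i" and bd: "bounded (CC j i)"
      using CC unfolding hcovers_def by blast
    have "z \<in> Slab (CC j i)" unfolding Slab_def z using i t by auto
    then have "z \<in> BoxC (CC j i)" using Slab_sub_BoxC[OF bd] by auto
    then show "z \<in> (\<Union>j\<in>J. U j)" using j unfolding U_def by auto
  qed
  then have "emeasure lborel E \<le> emeasure lborel (\<Union>j\<in>J. U j)"
    using U J by (intro emeasure_mono) auto
  also have "\<dots> \<le> (\<Sum>j\<in>J. emeasure lborel (U j))"
    using U J by (intro emeasure_subadditive_finite) auto
  also have "\<dots> \<le> (\<Sum>j\<in>J. ennreal Kc * hsum (real m) (CC j))"
  proof (intro sum_mono)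
    fix j assume j: "j \<in> J"
    have "emeasure lborel (U j) \<le> (\<Sum>i. emeasure lborel (BoxC (CC j i)))"
      unfolding U_def using BoxC_sets by (intro emeasure_subadditive_countably) auto
    also have "\<dots> \<le> (\<Sum>i. ennreal Kc * ennreal (hausdorff_normalization (real m) * (diameter (CC j i) / 2) powr real m))"
    proof (intro suminf_le allI)
      fix i
      have bd: "bounded (CC j i)" using CC j unfolding hcovers_def by auto
      show "emeasure lborel (BoxC (CC j i)) \<le> ennreal Kc * ennreal (hausdorff_normalization (real m) * (diameter (CC j i) / 2) powr real m)"
        using BoxC_measure[OF bd] term_bound[OF m diameter_ge_0[OF bd]] by (rule order_trans)
    qed auto
    also have "\<dots> = ennreal Kc * hsum (real m) (CC j)"
      unfolding hsum_def by (rule ennreal_suminf_cmult)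
    finally show "emeasure lborel (U j) \<le> ennreal Kc * hsum (real m) (CC j)" .
  qed
  also have "\<dots> = ennreal Kc * (\<Sum>j\<in>J. hsum (real m) (CC j))"
    by (simp add: sum_distrib_left)
  finally show "emeasure lborel E \<le> ennreal Kc * (\<Sum>j\<in>J. hsum (real m) (CC j))" .
qed

end

context frame2
begin

lemma vec_cong: "(\<And>i. i < Suc m \<Longrightarrow> f i = g i) \<Longrightarrow> vec f = vec g"
  unfolding vec_def by (intro sum.cong) auto

lemma e_sum_inner: "k < m \<Longrightarrow> (\<Sum>i<m. t i *\<^sub>R e i) \<bullet> e k = t k"
  unfolding inner_sum_left by (simp add: e_orth if_distrib cong: if_cong)

lemma e_coord: "k < m \<Longrightarrow> e k \<bullet> (c0 + (\<Sum>i<m. t i *\<^sub>R e i) - c0) = t k"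
  using e_sum_inner[of k t] by (simp add: inner_commute)

definition aq :: "real \<Rightarrow> nat \<times> (nat \<Rightarrow> nat) \<Rightarrow> nat \<Rightarrow> real" where
  "aq l0 q i = (real (snd q i) + 1/2) * dyadic_side l0 q - l0 / 2"

lemma centre_eq: "dyadic_centre e m c0 l0 q = c0 + (\<Sum>i<m. aq l0 q i *\<^sub>R e i)"
  unfolding dyadic_centre_def aq_def by simp

lemma side_facts:
  assumes "dyadic_index m q" "0 < l0" "i < m"
  shows "0 < dyadic_side l0 q" "dyadic_side l0 q \<le> l0"
    "(real (snd q i) + 1) * dyadic_side l0 q \<le> l0"
proof -
  have "snd q i < 2 ^ fst q" using assms unfolding dyadic_index_def by auto
  then have "real (snd q i) + 1 \<le> 2 ^ fst q"
    by (metis Suc_leI of_nat_Suc of_nat_le_iff of_nat_numeral of_nat_power add.commute)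
  then have "(real (snd q i) + 1) * (l0 / 2 ^ fst q) \<le> 2 ^ fst q * (l0 / 2 ^ fst q)"
    using assms by (intro mult_right_mono) auto
  then show "(real (snd q i) + 1) * dyadic_side l0 q \<le> l0" unfolding dyadic_side_def by simp
  show "0 < dyadic_side l0 q" using assms unfolding dyadic_side_def by simp
  have "(1::real) \<le> 2 ^ fst q" by simp
  then show "dyadic_side l0 q \<le> l0" using assms unfolding dyadic_side_def
    by (simp add: divide_le_eq)
qed

lemma dyadic_cube_sub:
  assumes q: "dyadic_index m q" and l0: "0 < l0" and a: "0 \<le> a" "a \<le> 6"
  shows "dyadic_cube e m c0 l0 a q \<subseteq> cube e m c0 (6 * l0)"
proof
  fix x assume "x \<in> dyadic_cube e m c0 l0 a q"
  then obtain t where x: "x = dyadic_centre e m c0 l0 q + (\<Sum>i<m. t i *\<^sub>R e i)"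
    and t: "\<forall>i<m. \<bar>t i\<bar> \<le> a * dyadic_side l0 q / 2"
    unfolding dyadic_cube_def cube_def by auto
  have "x = c0 + (\<Sum>i<m. (aq l0 q i + t i) *\<^sub>R e i)"
    unfolding x centre_eq scaleR_add_left sum.distrib by (simp only: add.assoc)
  moreover have "\<bar>aq l0 q i + t i\<bar> \<le> 6 * l0 / 2" if i: "i < m" for i
  proof -
    note sf = side_facts[OF q l0 i]
    have "a * dyadic_side l0 q / 2 \<le> 6 * dyadic_side l0 q / 2"
      using a sf by (intro divide_right_mono mult_right_mono) auto
    moreover have "\<bar>t i\<bar> \<le> a * dyadic_side l0 q / 2" using t i by blast
    ultimately have "\<bar>t i\<bar> \<le> 3 * dyadic_side l0 q" by linarith
    moreover have "0 \<le> real (snd q i) * dyadic_side l0 q" using sf by simp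
    moreover have "aq l0 q i = real (snd q i) * dyadic_side l0 q + dyadic_side l0 q / 2 - l0 / 2"
      unfolding aq_def by (simp add: algebra_simps)
    moreover have "real (snd q i) * dyadic_side l0 q + dyadic_side l0 q \<le> l0"
      using sf(3) by (simp add: algebra_simps)
    ultimately show ?thesis using sf(1,2) unfolding abs_le_iff by (intro conjI; linarith)
  qed
  ultimately show "x \<in> cube e m c0 (6 * l0)" unfolding cube_def
    by (intro CollectI exI[of _ "\<lambda>i. aq l0 q i + t i"] conjI allI impI) auto
qed

definition bx :: "real \<Rightarrow> nat \<times> (nat \<Rightarrow> nat) \<Rightarrow> 'a set" where
  "bx l0 q = box (vec (\<lambda>i. if i < m then real (snd q i) * dyadic_side l0 q - l0/2 else -1/2))
                  (vec (\<lambda>i. if i < m then (real (snd q i) + 1) * dyadic_side l0 q - l0/2 else 1/2))"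

lemma bx_sets: "bx l0 q \<in> sets lborel" unfolding bx_def by simp

lemma bx_measure:
  assumes "0 < dyadic_side l0 q"
  shows "emeasure lborel (bx l0 q) = ennreal (dyadic_side l0 q ^ m)"
  unfolding bx_def using assms
  by (subst measure_box_vec) (auto simp: prod.lessThan_Suc algebra_simps)

lemma bx_slab:
  assumes q: "dyadic_index m q" and l0: "0 < l0"
  shows "bx l0 q \<subseteq> Slab (dyadic_cube e m c0 l0 1 q)"
proof
  fix z assume z: "z \<in> bx l0 q"
  define s where "s = dyadic_side l0 q"
  have zc: "real (snd q i) * s - l0/2 < z \<bullet> bb i \<and> z \<bullet> bb i < (real (snd q i) + 1) * s - l0/2"
    if "i < m" for i
    using z that unfolding bx_def mem_box_vec s_def by (auto dest!: spec[of _ i])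
  have zm: "\<bar>z \<bullet> bb m\<bar> \<le> 1/2"
    using z unfolding bx_def mem_box_vec by (auto dest!: spec[of _ m])
  define y where "y = c0 + (\<Sum>i<m. (z \<bullet> bb i) *\<^sub>R e i)"
  have yeq: "y = dyadic_centre e m c0 l0 q + (\<Sum>i<m. (z \<bullet> bb i - aq l0 q i) *\<^sub>R e i)"
    unfolding y_def centre_eq by (simp add: scaleR_diff_left sum_subtractf)
  have tb: "\<bar>z \<bullet> bb i - aq l0 q i\<bar> \<le> 1 * dyadic_side l0 q / 2" if "i < m" for i
  proof -
    have "aq l0 q i = real (snd q i) * s + s/2 - l0/2" unfolding aq_def s_def by (simp add: algebra_simps)
    then have "z \<bullet> bb i - aq l0 q i \<le> s / 2" "aq l0 q i - z \<bullet> bb i \<le> s / 2"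
      using zc[OF that] by (simp_all add: algebra_simps)
    then show ?thesis unfolding s_def[symmetric] abs_le_iff by simp
  qed
  have y: "y \<in> dyadic_cube e m c0 l0 1 q"
    unfolding dyadic_cube_def cube_def
    by (intro CollectI exI[of _ "\<lambda>i. z \<bullet> bb i - aq l0 q i"] conjI yeq allI impI tb)
  have "psi y + (z \<bullet> bb m) *\<^sub>R bb m = vec (\<lambda>i. if i < m then z \<bullet> bb i else z \<bullet> bb m)"
    unfolding psi_pt y_def using e_coord by (intro vec_cong) auto
  also have "\<dots> = vec (\<lambda>i. z \<bullet> bb i)"
    by (rule vec_cong) (auto simp: less_Suc_eq)
  also have "\<dots> = z" by (rule vec_repr[symmetric])
  finally have zz: "z = psi y + (z \<bullet> bb m) *\<^sub>R bb m" by simp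
  show "z \<in> Slab (dyadic_cube e m c0 l0 1 q)"
    unfolding Slab_def using y zm zz by blast
qed

lemma bx_disjoint:
  assumes q: "dyadic_index m q" and q': "dyadic_index m q'" and k: "fst q = fst q'" and ne: "q \<noteq> q'"
  shows "bx l0 q \<inter> bx l0 q' = {}"
proof -
  have "snd q \<noteq> snd q'" using k ne by (simp add: prod_eq_iff)
  then obtain i where i: "snd q i \<noteq> snd q' i" by auto
  have im: "i < m"
  proof (rule ccontr)
    assume "\<not> i < m" then have "m \<le> i" by simp
    with q q' i show False unfolding dyadic_index_def by auto
  qed
  have s: "dyadic_side l0 q' = dyadic_side l0 q" using k unfolding dyadic_side_def by simp
  show ?thesis
  proof (rule ccontr)
    assume "bx l0 q \<inter> bx l0 q' \<noteq> {}"
    then obtain z where "z \<in> bx l0 q" "z \<in> bx l0 q'" by auto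
    then have a: "real (snd q i) * dyadic_side l0 q - l0/2 < z \<bullet> bb i \<and> z \<bullet> bb i < (real (snd q i) + 1) * dyadic_side l0 q - l0/2"
      and b: "real (snd q' i) * dyadic_side l0 q - l0/2 < z \<bullet> bb i \<and> z \<bullet> bb i < (real (snd q' i) + 1) * dyadic_side l0 q - l0/2"
      using im unfolding bx_def mem_box_vec s by (auto dest!: spec[of _ i])
    have "real (snd q i) * dyadic_side l0 q < (real (snd q' i) + 1) * dyadic_side l0 q"
      "real (snd q' i) * dyadic_side l0 q < (real (snd q i) + 1) * dyadic_side l0 q"
      using a b by linarith+
    then have "real (snd q i) < real (snd q' i) + 1" "real (snd q' i) < real (snd q i) + 1"
      by (auto simp: mult_less_cancel_right split: if_splits)
    then show False using i by linarith
  qed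
qed

end

context frame2
begin

lemma side_eq: "dyadic_side l0 q = l0 / 2 ^ fst q" unfolding dyadic_side_def ..

lemma union_measure:
  assumes l0: "0 < l0" and F: "finite F" and Fq: "\<And>q. q \<in> F \<Longrightarrow> dyadic_index m q \<and> fst q = k"
  shows "emeasure lborel (\<Union>q\<in>F. bx l0 q) = ennreal (real (card F) * (l0 / 2 ^ k) ^ m)"
proof -
  have "emeasure lborel (\<Union>q\<in>F. bx l0 q) = (\<Sum>q\<in>F. emeasure lborel (bx l0 q))"
  proof (intro sum_emeasure[symmetric])
    show "disjoint_family_on (bx l0) F"
      unfolding disjoint_family_on_def
    proof (intro ballI impI)
      fix q q' assume "q \<in> F" "q' \<in> F" "q \<noteq> q'"
      then show "bx l0 q \<inter> bx l0 q' = {}"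
        using Fq[of q] Fq[of q'] by (intro bx_disjoint) auto
    qed
  qed (use F bx_sets in auto)
  also have "\<dots> = (\<Sum>q\<in>F. ennreal ((l0 / 2 ^ k) ^ m))"
    by (intro sum.cong refl, subst bx_measure) (auto simp: side_eq l0 dest: Fq)
  also have "\<dots> = ennreal (real (card F) * (l0 / 2 ^ k) ^ m)"
    using l0 by (simp add: ennreal_mult ennreal_of_nat_eq_real_of_nat)
  finally show ?thesis .
qed

lemma card_small:
  assumes l0: "0 < l0" and F: "finite F" and Fq: "\<And>q. q \<in> F \<Longrightarrow> dyadic_index m q \<and> fst q = k"
  shows "real (card F) * (l0 / 2 ^ k) ^ m \<le> l0 ^ m"
proof -
  define B0 where "B0 = box (vec (\<lambda>i. if i < m then - l0 / 2 else -1/2)) (vec (\<lambda>i. if i < m then l0 / 2 else 1/2))"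
  have sub: "(\<Union>q\<in>F. bx l0 q) \<subseteq> B0"
  proof
    fix z assume "z \<in> (\<Union>q\<in>F. bx l0 q)"
    then obtain q where q: "q \<in> F" and z: "z \<in> bx l0 q" by auto
    have "- l0 / 2 < z \<bullet> bb i \<and> z \<bullet> bb i < l0 / 2" if i: "i < m" for i
    proof -
      note sf = side_facts[OF conjunct1[OF Fq[OF q]] l0 i]
      have "real (snd q i) * dyadic_side l0 q - l0/2 < z \<bullet> bb i \<and> z \<bullet> bb i < (real (snd q i) + 1) * dyadic_side l0 q - l0/2"
        using z i unfolding bx_def mem_box_vec by (auto dest!: spec[of _ i])
      moreover have "0 \<le> real (snd q i) * dyadic_side l0 q" using sf by simp
      ultimately show ?thesis using sf by linarith
    qed
    moreover have "- 1/2 < z \<bullet> bb m \<and> z \<bullet> bb m < 1/2"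
      using z unfolding bx_def mem_box_vec by (auto dest!: spec[of _ m])
    ultimately show "z \<in> B0" unfolding B0_def mem_box_vec by (auto simp: less_Suc_eq)
  qed
  have "ennreal (real (card F) * (l0 / 2 ^ k) ^ m) = emeasure lborel (\<Union>q\<in>F. bx l0 q)"
    using union_measure[OF l0 F Fq] by simp
  also have "\<dots> \<le> emeasure lborel B0"
    using sub unfolding B0_def by (intro emeasure_mono) auto
  also have "\<dots> = ennreal (l0 ^ m)"
    unfolding B0_def using l0 by (subst measure_box_vec) (auto simp: prod.lessThan_Suc)
  finally show ?thesis using l0 by (simp add: ennreal_le_iff)
qed

lemma card_large:
  assumes m: "0 < m" and l0: "0 < l0" and F: "finite F" and Fq: "\<And>q. q \<in> F \<Longrightarrow> dyadic_index m q \<and> fst q = k"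
    and J: "finite J" and AX: "(\<Union>q\<in>F. dyadic_cube e m c0 l0 1 q) \<subseteq> (\<Union>j\<in>J. X j)"
  shows "ennreal (real (card F) * (l0 / 2 ^ k) ^ m) \<le> ennreal Kc * (\<Sum>j\<in>J. hausdorff_content (real m) 1 (X j))"
proof -
  have "(\<Union>q\<in>F. bx l0 q) \<subseteq> Slab (\<Union>q\<in>F. dyadic_cube e m c0 l0 1 q)"
  proof
    fix z assume "z \<in> (\<Union>q\<in>F. bx l0 q)"
    then obtain q where q: "q \<in> F" and z: "z \<in> bx l0 q" by auto
    then have "z \<in> Slab (dyadic_cube e m c0 l0 1 q)" using bx_slab[OF conjunct1[OF Fq[OF q]] l0] by auto
    then show "z \<in> Slab (\<Union>q\<in>F. dyadic_cube e m c0 l0 1 q)" using q unfolding Slab_def by blast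
  qed
  then have "emeasure lborel (\<Union>q\<in>F. bx l0 q) \<le> ennreal Kc * (\<Sum>j\<in>J. hausdorff_content (real m) 1 (X j))"
    using F bx_sets by (intro slab_measure_bound[OF m J _ _ AX]) auto
  then show ?thesis using union_measure[OF l0 F Fq] by simp
qed

end

lemma geo_inj:
  fixes f :: "nat \<Rightarrow> real" and r :: real
  assumes S: "finite S" and inj: "inj_on h S" and img: "h ` S \<subseteq> {..<N}"
    and f: "\<And>k. k \<in> S \<Longrightarrow> f k \<le> r ^ h k" and r: "0 \<le> r" "r < 1"
  shows "sum f S \<le> 1 / (1 - r)"
proof -
  have "sum f S \<le> (\<Sum>k\<in>S. r ^ h k)" using f by (rule sum_mono)
  also have "\<dots> = (\<Sum>j\<in>h ` S. r ^ j)" using sum.reindex[OF inj, of "\<lambda>j. r ^ j"] by simp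
  also have "\<dots> \<le> (\<Sum>j<N. r ^ j)" using img r by (intro sum_mono2) auto
  also have "\<dots> = (1 - r ^ N) / (1 - r)" using r by (simp add: sum_gp_strict)
  also have "\<dots> \<le> 1 / (1 - r)" using r by (intro divide_right_mono) auto
  finally show ?thesis .
qed

lemma two_powr_lt: "0 < (a::real) \<Longrightarrow> 2 powr (- a) < 1"
  by (rule powr_less_one) auto

lemma powr_half_pow: "(1 / 2 ^ j :: real) powr a = (2 powr (- a)) ^ j"
  by (simp add: powr_minus_divide powr_realpow[symmetric] powr_powr powr_divide flip: powr_power)

lemma geo_tail:
  fixes \<alpha> y0 :: real
  assumes a: "0 < \<alpha>" and y0: "0 < y0"
  shows "(\<Sum>k\<in>{k. k < N \<and> y0 / 2 ^ k < 1}. (y0 / 2 ^ k) powr \<alpha>) \<le> 1 / (1 - 2 powr (- \<alpha>))"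
proof (cases "{k. k < N \<and> y0 / 2 ^ k < 1} = {}")
  case True
  have "2 powr (- \<alpha>) < 1" using a by (rule two_powr_lt)
  then show ?thesis unfolding True by simp
next
  case False
  define S where "S = {k. k < N \<and> y0 / 2 ^ k < 1}"
  have fS: "finite S" unfolding S_def by simp
  define k0 where "k0 = Min S"
  have ne: "S \<noteq> {}" using False unfolding S_def .
  have k0: "k0 \<in> S" "\<And>k. k \<in> S \<Longrightarrow> k0 \<le> k" unfolding k0_def using Min_in[OF fS ne] Min_le[OF fS] by auto
  show ?thesis unfolding S_def[symmetric]
  proof (rule geo_inj[OF fS, of "\<lambda>k. k - k0" N])
    show "inj_on (\<lambda>k. k - k0) S" using k0(2) by (auto simp: inj_on_def) (metis le_add_diff_inverse)
    show "(\<lambda>k. k - k0) ` S \<subseteq> {..<N}" unfolding S_def by auto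
    show "0 \<le> 2 powr - \<alpha>" by simp
    show "2 powr - \<alpha> < 1" using a by (rule two_powr_lt)
    fix k assume k: "k \<in> S"
    have "y0 / 2 ^ k = (y0 / 2 ^ k0) / 2 ^ (k - k0)"
      using k0(2)[OF k] by (simp add: power_diff)
    also have "\<dots> \<le> 1 / 2 ^ (k - k0)"
      using k0(1) unfolding S_def by (intro divide_right_mono) auto
    finally have "(y0 / 2 ^ k) powr \<alpha> \<le> (1 / 2 ^ (k - k0)) powr \<alpha>"
      using y0 a by (intro powr_mono2) auto
    then show "(y0 / 2 ^ k) powr \<alpha> \<le> (2 powr - \<alpha>) ^ (k - k0)" by (simp only: powr_half_pow)
  qed
qed

lemma geo_head:
  fixes \<beta> x0 :: real
  assumes b: "0 < \<beta>" and x0: "0 < x0"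
  shows "(\<Sum>k\<in>{k. k < N \<and> x0 * 2 ^ k \<le> 1}. (x0 * 2 ^ k) powr \<beta>) \<le> 1 / (1 - 2 powr (- \<beta>))"
proof (cases "{k. k < N \<and> x0 * 2 ^ k \<le> 1} = {}")
  case True
  have "2 powr (- \<beta>) < 1" using b by (rule two_powr_lt)
  then show ?thesis unfolding True by simp
next
  case False
  define S where "S = {k. k < N \<and> x0 * 2 ^ k \<le> 1}"
  have fS: "finite S" unfolding S_def by simp
  define k1 where "k1 = Max S"
  have ne: "S \<noteq> {}" using False unfolding S_def .
  have k1: "k1 \<in> S" "\<And>k. k \<in> S \<Longrightarrow> k \<le> k1" unfolding k1_def using Max_in[OF fS ne] Max_ge[OF fS] by auto
  show ?thesis unfolding S_def[symmetric]
  proof (rule geo_inj[OF fS, of "\<lambda>k. k1 - k" N])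
    show "inj_on (\<lambda>k. k1 - k) S" using k1(2) by (auto simp: inj_on_def) (metis diff_diff_cancel)
    show "(\<lambda>k. k1 - k) ` S \<subseteq> {..<N}" using k1(1) unfolding S_def by auto
    show "0 \<le> 2 powr - \<beta>" by simp
    show "2 powr - \<beta> < 1" using b by (rule two_powr_lt)
    fix k assume k: "k \<in> S"
    have "x0 * 2 ^ k = (x0 * 2 ^ k1) / 2 ^ (k1 - k)"
      using k1(2)[OF k] by (simp add: power_diff)
    also have "\<dots> \<le> 1 / 2 ^ (k1 - k)"
      using k1(1) unfolding S_def by (intro divide_right_mono) auto
    finally have "(x0 * 2 ^ k) powr \<beta> \<le> (1 / 2 ^ (k1 - k)) powr \<beta>"
      using x0 b by (intro powr_mono2) auto
    then show "(x0 * 2 ^ k) powr \<beta> \<le> (2 powr - \<beta>) ^ (k1 - k)" by (simp only: powr_half_pow)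
  qed
qed

lemma pw1:
  assumes "0 < \<tau>" "0 < s"
  shows "(\<tau>::real) ^ m * s powr (\<alpha> - real m) = \<tau> powr \<alpha> * (\<tau> / s) powr (real m - \<alpha>)"
proof -
  have "\<tau> powr \<alpha> * (\<tau> / s) powr (real m - \<alpha>) = \<tau> powr \<alpha> * (\<tau> powr (real m - \<alpha>) / s powr (real m - \<alpha>))"
    using assms by (simp add: powr_divide)
  also have "\<dots> = \<tau> powr (\<alpha> + (real m - \<alpha>)) / s powr (real m - \<alpha>)"
    by (simp only: powr_add times_divide_eq_right)
  also have "\<dots> = \<tau> ^ m * s powr (\<alpha> - real m)"
    using assms by (simp add: powr_realpow powr_minus_divide divide_inverse powr_minus[symmetric])
  finally show ?thesis by simp
qed

lemma gen_sum:
  fixes \<alpha> \<tau> l0 Lm K2 :: real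
  assumes a: "0 < \<alpha>" and am: "\<alpha> < real m" and \<tau>: "0 < \<tau>" and l0: "0 < l0"
    and Lm: "0 \<le> Lm" and K2: "0 \<le> K2"
  shows "(\<Sum>k<N. if l0 / 2 ^ k < \<tau> then Lm * (l0 / 2 ^ k) powr \<alpha>
                  else K2 * \<tau> ^ m * (l0 / 2 ^ k) powr (\<alpha> - real m))
         \<le> (Lm / (1 - 2 powr (- \<alpha>)) + K2 / (1 - 2 powr (- (real m - \<alpha>)))) * \<tau> powr \<alpha>"
proof -
  have r1: "2 powr (- \<alpha>) < 1" using a by (rule two_powr_lt)
  have r2: "2 powr (- (real m - \<alpha>)) < 1" using am by (intro two_powr_lt) simp
  have S1: "{..<N} \<inter> {k. l0 / 2 ^ k < \<tau>} = {k. k < N \<and> l0 / \<tau> / 2 ^ k < 1}"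
    using \<tau> by (auto simp: divide_less_eq field_simps)
  have S2: "{..<N} \<inter> - {k. l0 / 2 ^ k < \<tau>} = {k. k < N \<and> \<tau> / l0 * 2 ^ k \<le> 1}"
    using \<tau> l0 by (auto simp: field_simps not_less)
  have P1: "(\<Sum>k\<in>{..<N} \<inter> {k. l0 / 2 ^ k < \<tau>}. Lm * (l0 / 2 ^ k) powr \<alpha>)
      \<le> Lm / (1 - 2 powr (- \<alpha>)) * \<tau> powr \<alpha>"
  proof -
    have "(\<Sum>k\<in>{..<N} \<inter> {k. l0 / 2 ^ k < \<tau>}. Lm * (l0 / 2 ^ k) powr \<alpha>)
        = Lm * \<tau> powr \<alpha> * (\<Sum>k\<in>{k. k < N \<and> l0 / \<tau> / 2 ^ k < 1}. (l0 / \<tau> / 2 ^ k) powr \<alpha>)"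
      unfolding S1 sum_distrib_left
    proof (intro sum.cong refl)
      fix k
      have "l0 / 2 ^ k = \<tau> * (l0 / \<tau> / 2 ^ k)" using \<tau> by simp
      then have "(l0 / 2 ^ k) powr \<alpha> = \<tau> powr \<alpha> * (l0 / \<tau> / 2 ^ k) powr \<alpha>"
        using \<tau> l0 by (metis powr_mult less_imp_le divide_nonneg_nonneg zero_le_power zero_le_numeral)
      then show "Lm * (l0 / 2 ^ k) powr \<alpha> = Lm * \<tau> powr \<alpha> * (l0 / \<tau> / 2 ^ k) powr \<alpha>"
        by simp
    qed
    also have "\<dots> \<le> Lm * \<tau> powr \<alpha> * (1 / (1 - 2 powr (- \<alpha>)))"
      using Lm \<tau> l0 a by (intro mult_left_mono geo_tail) auto
    finally show ?thesis by simp
  qed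
  have P2: "(\<Sum>k\<in>{..<N} \<inter> - {k. l0 / 2 ^ k < \<tau>}. K2 * \<tau> ^ m * (l0 / 2 ^ k) powr (\<alpha> - real m))
      \<le> K2 / (1 - 2 powr (- (real m - \<alpha>))) * \<tau> powr \<alpha>"
  proof -
    have "(\<Sum>k\<in>{..<N} \<inter> - {k. l0 / 2 ^ k < \<tau>}. K2 * \<tau> ^ m * (l0 / 2 ^ k) powr (\<alpha> - real m))
        = K2 * \<tau> powr \<alpha> * (\<Sum>k\<in>{k. k < N \<and> \<tau> / l0 * 2 ^ k \<le> 1}. (\<tau> / l0 * 2 ^ k) powr (real m - \<alpha>))"
      unfolding S2 sum_distrib_left
    proof (intro sum.cong refl)
      fix k
      have "\<tau> / (l0 / 2 ^ k) = \<tau> / l0 * 2 ^ k" by simp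
      then show "K2 * \<tau> ^ m * (l0 / 2 ^ k) powr (\<alpha> - real m) = K2 * \<tau> powr \<alpha> * (\<tau> / l0 * 2 ^ k) powr (real m - \<alpha>)"
        using pw1[OF \<tau>, of "l0 / 2 ^ k" m \<alpha>] l0 by (simp add: mult.assoc)
    qed
    also have "\<dots> \<le> K2 * \<tau> powr \<alpha> * (1 / (1 - 2 powr (- (real m - \<alpha>))))"
      using K2 \<tau> l0 am by (intro mult_left_mono geo_head) auto
    finally show ?thesis by simp
  qed
  have "(\<Sum>k<N. if l0 / 2 ^ k < \<tau> then Lm * (l0 / 2 ^ k) powr \<alpha>
                  else K2 * \<tau> ^ m * (l0 / 2 ^ k) powr (\<alpha> - real m))
      = (\<Sum>k\<in>{..<N} \<inter> {k. l0 / 2 ^ k < \<tau>}. Lm * (l0 / 2 ^ k) powr \<alpha>)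
        + (\<Sum>k\<in>{..<N} \<inter> - {k. l0 / 2 ^ k < \<tau>}. K2 * \<tau> ^ m * (l0 / 2 ^ k) powr (\<alpha> - real m))"
    by (rule sum.If_cases) simp
  also have "\<dots> \<le> (Lm / (1 - 2 powr (- \<alpha>)) + K2 / (1 - 2 powr (- (real m - \<alpha>)))) * \<tau> powr \<alpha>"
    using P1 P2 by (simp add: distrib_right)
  finally show ?thesis .
qed

lemma tproj_lip:
  fixes \<nu> :: "'a::euclidean_space"
  assumes "norm \<nu> = 1"
  shows "dist (tproj x0 \<nu> x) (tproj x0 \<nu> y) \<le> dist x y"
proof -
  define v where "v = x - y"
  have nn: "\<nu> \<bullet> \<nu> = 1" using assms by (simp add: norm_eq_1)
  have "tproj x0 \<nu> x - tproj x0 \<nu> y = v - (v \<bullet> \<nu>) *\<^sub>R \<nu>"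
    unfolding tproj_def v_def by (simp add: algebra_simps inner_diff_left)
  moreover have "(v - (v \<bullet> \<nu>) *\<^sub>R \<nu>) \<bullet> (v - (v \<bullet> \<nu>) *\<^sub>R \<nu>) = v \<bullet> v - (v \<bullet> \<nu>)^2"
    using nn by (simp add: inner_diff_left inner_diff_right inner_commute power2_eq_square algebra_simps)
  ultimately have "norm (tproj x0 \<nu> x - tproj x0 \<nu> y) \<le> norm v"
    by (simp add: norm_le)
  then show ?thesis by (simp add: dist_norm v_def)
qed

lemma tproj_self: "tproj x0 \<nu> x0 = x0"
  unfolding tproj_def by simp

lemma kappa_nonneg: "0 \<le> kappa \<mu> (\<nu>::'a::euclidean_space)"
  unfolding kappa_def
proof (rule cInf_greatest)
  obtain b :: 'a where b: "b \<in> Basis" using nonempty_Basis by blast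
  have "b \<in> int_lattice" unfolding int_lattice_def using b by (auto simp: inner_Basis)
  moreover have "b \<noteq> 0" using b by auto
  ultimately show "{norm (\<xi> - (\<nu> \<bullet> \<xi>) *\<^sub>R \<nu>) * norm \<xi> powr \<mu> |\<xi>. \<xi> \<in> int_lattice \<and> \<xi> \<noteq> 0} \<noteq> {}"
    by blast
qed auto

lemma unit_normal:
  assumes "smooth_boundary_normal \<Omega> n" "x \<in> frontier \<Omega>"
  shows "norm (n x) = 1"
proof -
  from assms obtain U \<rho> G where "x \<in> U" "G x \<noteq> 0" "n x = (1 / norm (G x)) *\<^sub>R G x"
    unfolding smooth_boundary_normal_def by blast
  then show ?thesis by simp
qed

lemma cube_mono: "l \<le> l' \<Longrightarrow> cube e m c l \<subseteq> cube e m c l'"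
  unfolding cube_def by (auto intro: order_trans divide_right_mono)

context frame2
begin

lemma dcube_mono: "dyadic_index m q \<Longrightarrow> 0 < l0 \<Longrightarrow> a \<le> b \<Longrightarrow> 0 \<le> a \<Longrightarrow> dyadic_cube e m c0 l0 a q \<subseteq> dyadic_cube e m c0 l0 b q"
  unfolding dyadic_cube_def
  by (rule cube_mono, rule mult_right_mono) (auto simp: dyadic_side_def)

lemma t_powr:
  assumes "0 < s" "0 < \<tau>" "0 < p" "0 < m"
  shows "((1/2) * (s / \<tau>) powr (real m / p)) powr p = (1/2) powr p * (s / \<tau>) ^ m"
proof -
  have "((1/2) * (s / \<tau>) powr (real m / p)) powr p = (1/2) powr p * ((s / \<tau>) powr (real m / p)) powr p"
    using assms by (intro powr_mult)
  also have "((s / \<tau>) powr (real m / p)) powr p = (s / \<tau>) powr (real m)"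
    using assms by (simp add: powr_powr)
  also have "\<dots> = (s / \<tau>) ^ m" using assms by (simp add: powr_realpow)
  finally show ?thesis .
qed

lemma gen_large:
  fixes P :: "'a \<Rightarrow> 'a" and kap :: "'a \<Rightarrow> real" and Gf :: "'a \<Rightarrow> real"
  assumes m: "0 < m" and l0: "0 < l0" and \<tau>: "0 < \<tau>" and p: "0 < p"
    and F: "finite F"
    and Fq: "\<And>q. q \<in> F \<Longrightarrow> dyadic_index m q \<and> fst q = k \<and> good_cube e m c0 l0 Gf \<tau> q"
    and cover6: "cube e m c0 (6 * l0) \<subseteq> P ` V"
    and inj: "inj_on P V"
    and Plip: "\<And>x y. dist (P x) (P y) \<le> dist x y"
    and Gf: "\<And>y. Gf y = kap (the_inv_into V P y) powr (1 / (real m / p))"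
    and kap_nn: "\<And>x. 0 \<le> kap x"
    and VV: "V \<subseteq> V'"
    and Hyp: "\<And>t. t > 0 \<Longrightarrow> ennreal (t powr p) * hausdorff_measure (real m) {x \<in> V'. kap x < 1 / t} \<le> ennreal M"
  shows "real (card F) * (l0 / 2 ^ k) ^ m \<le> Kc * max M 0 * 2 powr p * (\<tau> / (l0 / 2 ^ k)) ^ m"
proof -
  define s where "s = l0 / 2 ^ k"
  have s: "0 < s" unfolding s_def using l0 by simp
  define t where "t = (1/2) * (s / \<tau>) powr (real m / p)"
  have t: "0 < t" unfolding t_def using s \<tau> by simp
  have tinv: "1 / t = 2 * (\<tau> / s) powr (real m / p)"
    unfolding t_def using s \<tau> by (simp add: powr_divide divide_simps)
  define S' where "S' = {x \<in> V'. kap x < 1 / t}"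
  define X where "X j = (case j of None \<Rightarrow> P ` S'
      | Some q \<Rightarrow> {y \<in> dyadic_cube e m c0 l0 6 q. \<bar>Gf y\<bar> > \<tau> / dyadic_side l0 q})" for j
  define J where "J = insert None (Some ` F)"
  have J: "finite J" unfolding J_def using F by simp
  have sideq: "dyadic_side l0 q = s" if "q \<in> F" for q
    using Fq[OF that] unfolding s_def dyadic_side_def by simp
  have AX: "(\<Union>q\<in>F. dyadic_cube e m c0 l0 1 q) \<subseteq> (\<Union>j\<in>J. X j)"
  proof
    fix y assume "y \<in> (\<Union>q\<in>F. dyadic_cube e m c0 l0 1 q)"
    then obtain q where q: "q \<in> F" and y1: "y \<in> dyadic_cube e m c0 l0 1 q" by auto
    have dq: "dyadic_index m q" using Fq[OF q] by simp
    have y6: "y \<in> dyadic_cube e m c0 l0 6 q" using dcube_mono[OF dq l0, of 1 6] y1 by auto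
    show "y \<in> (\<Union>j\<in>J. X j)"
    proof (cases "\<bar>Gf y\<bar> > \<tau> / dyadic_side l0 q")
      case True
      then have "y \<in> X (Some q)" unfolding X_def using y6 by simp
      then show ?thesis unfolding J_def using q by blast
    next
      case False
      then have Gle: "Gf y \<le> \<tau> / s" using sideq[OF q] by simp
      have "y \<in> P ` V" using dyadic_cube_sub[OF dq l0, of 6] y6 cover6 by auto
      define x where "x = the_inv_into V P y"
      have xV: "x \<in> V" unfolding x_def using the_inv_into_into[OF inj \<open>y \<in> P ` V\<close>] by simp
      have Px: "P x = y" unfolding x_def using f_the_inv_into_f[OF inj \<open>y \<in> P ` V\<close>] .
      have kle: "kap x \<le> (\<tau> / s) powr (real m / p)"
      proof (cases "kap x = 0")
        case True then show ?thesis by simp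
      next
        case False
        then have kpos: "0 < kap x" using kap_nn[of x] by simp
        have "kap x = (kap x powr (1 / (real m / p))) powr (real m / p)"
          using kpos m p by (simp add: powr_powr)
        also have "\<dots> \<le> (\<tau> / s) powr (real m / p)"
          using Gle Gf[of y] kpos m p unfolding x_def[symmetric] by (intro powr_mono2) auto
        finally show ?thesis .
      qed
      have "kap x < 1 / t"
        unfolding tinv using kle s \<tau> by (smt (verit) powr_gt_zero divide_pos_pos)
      then have "x \<in> S'" unfolding S'_def using xV VV by auto
      then have "y \<in> X None" unfolding X_def using Px by auto
      then show ?thesis unfolding J_def by blast
    qed
  qed
  have "ennreal (real (card F) * (l0 / 2 ^ k) ^ m) \<le> ennreal Kc * (\<Sum>j\<in>J. hausdorff_content (real m) 1 (X j))"
    using card_large[OF m l0 F _ J AX] Fq by blast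
  also have "(\<Sum>j\<in>J. hausdorff_content (real m) 1 (X j)) =
      hausdorff_content (real m) 1 (X None) + (\<Sum>q\<in>F. hausdorff_content (real m) 1 (X (Some q)))"
    unfolding J_def using F by (simp add: sum.reindex)
  also have "(\<Sum>q\<in>F. hausdorff_content (real m) 1 (X (Some q))) = 0"
  proof (intro sum.neutral ballI)
    fix q assume q: "q \<in> F"
    have "hausdorff_content (real m) 1 (X (Some q)) \<le> hausdorff_measure (real m) (X (Some q))"
      by (rule content_le_measure)
    also have "\<dots> = 0" using Fq[OF q] unfolding good_cube_def X_def by simp
    finally show "hausdorff_content (real m) 1 (X (Some q)) = 0" by simp
  qed
  also have "hausdorff_content (real m) 1 (X None) \<le> hausdorff_measure (real m) S'"
  proof -
    have "hausdorff_content (real m) 1 (X None) \<le> hausdorff_content (real m) 1 S'"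
      unfolding X_def using Plip by (simp add: content_lip)
    also have "\<dots> \<le> hausdorff_measure (real m) S'" by (rule content_le_measure)
    finally show ?thesis .
  qed
  also have "hausdorff_measure (real m) S' \<le> ennreal (max M 0 / t powr p)"
  proof (cases "hausdorff_measure (real m) S'")
    case (real h)
    have "ennreal (t powr p * h) = ennreal (t powr p) * hausdorff_measure (real m) S'"
      using real t by (simp add: ennreal_mult)
    also have "\<dots> \<le> ennreal M" using Hyp[OF t] unfolding S'_def .
    also have "\<dots> \<le> ennreal (max M 0)" by (intro ennreal_leI) simp
    finally have "t powr p * h \<le> max M 0" by (simp add: ennreal_le_iff)
    then have "h \<le> max M 0 / t powr p" using t by (simp add: field_simps)
    then show ?thesis using real by (simp add: ennreal_leI)
  next
    case top
    have "ennreal (t powr p) * hausdorff_measure (real m) S' = \<infinity>"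
      using top t by (simp add: ennreal_mult_top)
    then have "\<infinity> \<le> ennreal M" using Hyp[OF t] unfolding S'_def by simp
    then show ?thesis by (simp add: top_unique)
  qed
  finally have "ennreal (real (card F) * (l0 / 2 ^ k) ^ m) \<le> ennreal Kc * ennreal (max M 0 / t powr p)"
    by (simp add: mult_left_mono)
  also have "\<dots> = ennreal (Kc * (max M 0 / t powr p))"
    using Kc_pos t by (intro ennreal_mult[symmetric]) auto
  finally have main: "real (card F) * (l0 / 2 ^ k) ^ m \<le> Kc * (max M 0 / t powr p)"
    using Kc_pos t by (subst (asm) ennreal_le_iff) (auto intro!: mult_nonneg_nonneg divide_nonneg_pos)
  have "max M 0 / t powr p = max M 0 * 2 powr p * (\<tau> / s) ^ m"
    unfolding t_def t_powr[OF s \<tau> p m] using s \<tau>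
    by (simp add: powr_divide power_divide field_simps)
  then show ?thesis using main unfolding s_def by (simp add: mult.assoc)
qed

end

context frame2
begin

lemma gen_bound:
  fixes P :: "'a \<Rightarrow> 'a" and kap :: "'a \<Rightarrow> real" and Gf :: "'a \<Rightarrow> real"
  assumes m: "0 < m" and l0: "0 < l0" and \<tau>: "0 < \<tau>" and p: "0 < p"
    and F: "finite F"
    and Fq: "\<And>q. q \<in> F \<Longrightarrow> dyadic_index m q \<and> fst q = k \<and> good_cube e m c0 l0 Gf \<tau> q"
    and cover6: "cube e m c0 (6 * l0) \<subseteq> P ` V"
    and inj: "inj_on P V"
    and Plip: "\<And>x y. dist (P x) (P y) \<le> dist x y"
    and Gf: "\<And>y. Gf y = kap (the_inv_into V P y) powr (1 / (real m / p))"
    and kap_nn: "\<And>x. 0 \<le> kap x"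
    and VV: "V \<subseteq> V'"
    and Hyp: "\<And>t. t > 0 \<Longrightarrow> ennreal (t powr p) * hausdorff_measure (real m) {x \<in> V'. kap x < 1 / t} \<le> ennreal M"
    and Lb: "l0 \<le> Lb"
  shows "(\<Sum>q\<in>F. dyadic_side l0 q powr (real m + \<alpha>)) \<le>
    (if l0 / 2 ^ k < \<tau> then Lb ^ m * (l0 / 2 ^ k) powr \<alpha>
     else Kc * max M 0 * 2 powr p * \<tau> ^ m * (l0 / 2 ^ k) powr (\<alpha> - real m))"
proof -
  define s where "s = l0 / 2 ^ k"
  have s: "0 < s" unfolding s_def using l0 by simp
  have "(\<Sum>q\<in>F. dyadic_side l0 q powr (real m + \<alpha>)) = (\<Sum>q\<in>F. s powr (real m + \<alpha>))"
    using Fq unfolding s_def dyadic_side_def by (intro sum.cong) auto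
  also have "\<dots> = real (card F) * s ^ m * s powr \<alpha>"
    using s by (simp add: powr_add powr_realpow)
  finally have eq: "(\<Sum>q\<in>F. dyadic_side l0 q powr (real m + \<alpha>)) = real (card F) * s ^ m * s powr \<alpha>" .
  have small: "real (card F) * s ^ m * s powr \<alpha> \<le> Lb ^ m * s powr \<alpha>"
  proof (intro mult_right_mono)
    have "real (card F) * s ^ m \<le> l0 ^ m" unfolding s_def
      using Fq by (intro card_small[OF l0 F]) auto
    also have "\<dots> \<le> Lb ^ m" using l0 Lb by (intro power_mono) auto
    finally show "real (card F) * s ^ m \<le> Lb ^ m" .
  qed simp
  have large: "real (card F) * s ^ m * s powr \<alpha> \<le> Kc * max M 0 * 2 powr p * \<tau> ^ m * s powr (\<alpha> - real m)"
  proof -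
    have "real (card F) * s ^ m * s powr \<alpha> \<le> Kc * max M 0 * 2 powr p * (\<tau> / s) ^ m * s powr \<alpha>"
      using gen_large[OF m l0 \<tau> p F Fq cover6 inj Plip Gf kap_nn VV Hyp] unfolding s_def
      by (intro mult_right_mono) auto
    moreover have "(\<tau> / s) ^ m * s powr \<alpha> = \<tau> ^ m * s powr (\<alpha> - real m)"
      using s by (simp add: powr_diff powr_realpow power_divide)
    ultimately show ?thesis by (simp add: mult.assoc)
  qed
  show ?thesis unfolding eq using small large unfolding s_def by simp
qed

end

theorem lemma5p3:
  fixes \<Omega> :: "'a::euclidean_space set" and n :: "'a \<Rightarrow> 'a" and \<mu> p :: real
  assumes "bounded \<Omega>" and "open \<Omega>" and "connected \<Omega>"
    and "smooth_boundary_normal \<Omega> n"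
    and "\<mu> > 0" and "p > 0" and "p \<le> real DIM('a) - 1"
    and "\<exists>M. \<forall>t>0. ennreal (t powr p) *
            hausdorff_measure (real DIM('a) - 1) {x \<in> frontier \<Omega>. kappa \<mu> (n x) < 1 / t}
          \<le> ennreal M"
  shows "\<exists>rbar>0. \<forall>\<alpha>. 0 < \<alpha> \<and> \<alpha> < real DIM('a) - 1 \<longrightarrow>
    (\<exists>C. \<forall>x0 r0 (e :: nat \<Rightarrow> 'a) c0 l0 W.
       x0 \<in> frontier \<Omega> \<and> 0 < r0 \<and> r0 < rbar \<and>
       (\<forall>i<DIM('a) - 1. \<forall>j<DIM('a) - 1. e i \<bullet> e j = (if i = j then 1 else 0)) \<and>
       (\<forall>i<DIM('a) - 1. e i \<bullet> n x0 = 0) \<and>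
       (c0 - x0) \<bullet> n x0 = 0 \<and> 0 < l0 \<and>
       open W \<and> x0 \<in> W \<and>
       inj_on (tproj x0 (n x0)) (W \<inter> frontier \<Omega>) \<and>
       cube e (DIM('a) - 1) c0 (6 * l0) \<subseteq> tproj x0 (n x0) ` (W \<inter> frontier \<Omega>) \<and>
       ball x0 (2 * r0) \<inter> frontier \<Omega>
         \<subseteq> {x \<in> W \<inter> frontier \<Omega>. tproj x0 (n x0) x \<in> cube e (DIM('a) - 1) c0 l0} \<and>
       {x \<in> W \<inter> frontier \<Omega>. tproj x0 (n x0) x \<in> cube e (DIM('a) - 1) c0 l0}
         \<subseteq> ball x0 (4 * r0 * sqrt (real DIM('a))) \<inter> frontier \<Omega>
       \<longrightarrow>
       (\<exists>\<tau>0>0. \<forall>\<tau>. 0 < \<tau> \<and> \<tau> < \<tau>0 \<longrightarrow>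
          (\<Sum>\<^sub>\<infinity>q\<in>maximal_good_cubes e (DIM('a) - 1) c0 l0
                 (\<lambda>y. kappa \<mu> (n (the_inv_into (W \<inter> frontier \<Omega>) (tproj x0 (n x0)) y))
                        powr (1 / ((real DIM('a) - 1) / p))) \<tau>.
             ennreal (dyadic_side l0 q powr (real DIM('a) - 1 + \<alpha>)))
          \<le> ennreal (C * \<tau> powr \<alpha>)))"
proof -
  note sbn = assms(4) and pp = assms(6) and pd = assms(7)
  define m where "m = DIM('a) - 1"
  have d2: "2 \<le> DIM('a)"
  proof (rule ccontr)
    assume "\<not> 2 \<le> DIM('a)"
    then have "DIM('a) = 1" using DIM_positive[where 'a='a] by linarith
    then show False using pp pd by simp
  qed
  have m0: "0 < m" unfolding m_def using d2 by simp
  have dm: "DIM('a) = Suc m" unfolding m_def using d2 by simp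
  have rm: "real DIM('a) - 1 = real m" unfolding dm by simp
  obtain M where HM: "\<forall>t>0. ennreal (t powr p) *
      hausdorff_measure (real m) {x \<in> frontier \<Omega>. kappa \<mu> (n x) < 1 / t} \<le> ennreal M"
    using assms(8) unfolding rm by blast
  obtain bb :: "nat \<Rightarrow> 'a" where bb: "bij_betw bb {..<Suc m} Basis"
    using ex_bij_betw_nat_finite[OF finite_Basis] unfolding dm[symmetric]
    by (metis atLeast0LessThan)
  show ?thesis
    unfolding rm m_def[symmetric]
  proof (rule exI[of _ 1], intro conjI allI impI)
    show "(0::real) < 1" by simp
    fix \<alpha> :: real assume \<alpha>: "0 < \<alpha> \<and> \<alpha> < real m"
    define Lb where "Lb = 8 * sqrt (real DIM('a))"
    define Kc0 where "Kc0 = 4 ^ m / hausdorff_normalization (real m)"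
    define K2 where "K2 = Kc0 * max M 0 * 2 powr p"
    define C where "C = Lb ^ m / (1 - 2 powr (- \<alpha>)) + K2 / (1 - 2 powr (- (real m - \<alpha>)))"
    show "\<exists>C. \<forall>x0 r0 e c0 l0 W.
       x0 \<in> frontier \<Omega> \<and> 0 < r0 \<and> r0 < 1 \<and>
       (\<forall>i<m. \<forall>j<m. e i \<bullet> e j = (if i = j then 1 else 0)) \<and>
       (\<forall>i<m. e i \<bullet> n x0 = 0) \<and>
       (c0 - x0) \<bullet> n x0 = 0 \<and> 0 < l0 \<and>
       open W \<and> x0 \<in> W \<and>
       inj_on (tproj x0 (n x0)) (W \<inter> frontier \<Omega>) \<and>
       cube e m c0 (6 * l0) \<subseteq> tproj x0 (n x0) ` (W \<inter> frontier \<Omega>) \<and>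
       ball x0 (2 * r0) \<inter> frontier \<Omega>
         \<subseteq> {x \<in> W \<inter> frontier \<Omega>. tproj x0 (n x0) x \<in> cube e m c0 l0} \<and>
       {x \<in> W \<inter> frontier \<Omega>. tproj x0 (n x0) x \<in> cube e m c0 l0}
         \<subseteq> ball x0 (4 * r0 * sqrt (real DIM('a))) \<inter> frontier \<Omega>
       \<longrightarrow>
       (\<exists>\<tau>0>0. \<forall>\<tau>. 0 < \<tau> \<and> \<tau> < \<tau>0 \<longrightarrow>
          (\<Sum>\<^sub>\<infinity>q\<in>maximal_good_cubes e m c0 l0
                 (\<lambda>y. kappa \<mu> (n (the_inv_into (W \<inter> frontier \<Omega>) (tproj x0 (n x0)) y))
                        powr (1 / (real m / p))) \<tau>.
             ennreal (dyadic_side l0 q powr (real m + \<alpha>)))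
          \<le> ennreal (C * \<tau> powr \<alpha>))"
    proof (rule exI[of _ C], intro allI impI)
      fix x0 r0 e c0 l0 W
      assume H: "x0 \<in> frontier \<Omega> \<and> 0 < r0 \<and> r0 < 1 \<and>
       (\<forall>i<m. \<forall>j<m. e i \<bullet> e j = (if i = j then 1 else 0)) \<and>
       (\<forall>i<m. e i \<bullet> n x0 = 0) \<and>
       (c0 - x0) \<bullet> n x0 = 0 \<and> 0 < l0 \<and>
       open W \<and> x0 \<in> W \<and>
       inj_on (tproj x0 (n x0)) (W \<inter> frontier \<Omega>) \<and>
       cube e m c0 (6 * l0) \<subseteq> tproj x0 (n x0) ` (W \<inter> frontier \<Omega>) \<and>
       ball x0 (2 * r0) \<inter> frontier \<Omega>
         \<subseteq> {x \<in> W \<inter> frontier \<Omega>. tproj x0 (n x0) x \<in> cube e m c0 l0} \<and>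
       {x \<in> W \<inter> frontier \<Omega>. tproj x0 (n x0) x \<in> cube e m c0 l0}
         \<subseteq> ball x0 (4 * r0 * sqrt (real DIM('a))) \<inter> frontier \<Omega>"
      define P where "P = tproj x0 (n x0)"
      define V where "V = W \<inter> frontier \<Omega>"
      have x0: "x0 \<in> frontier \<Omega>" and r0: "0 < r0" "r0 < 1" and l0: "0 < l0"
        and eo: "\<And>i j. i < m \<Longrightarrow> j < m \<Longrightarrow> e i \<bullet> e j = (if i = j then 1 else 0)"
        and inj: "inj_on P V" and cover6: "cube e m c0 (6 * l0) \<subseteq> P ` V"
        and ballc: "{x \<in> V. P x \<in> cube e m c0 l0} \<subseteq> ball x0 (4 * r0 * sqrt (real DIM('a)))"
        using H unfolding P_def V_def by auto
      have nu: "norm (n x0) = 1" using unit_normal[OF sbn x0] .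
      have Plip: "\<And>x y. dist (P x) (P y) \<le> dist x y" unfolding P_def using tproj_lip[OF nu] .
      interpret fr: frame2 bb m e c0
        by unfold_locales (use bb eo in auto)
      have Kc: "fr.Kc = Kc0" unfolding fr.Kc_def Kc0_def ..
      have Lb: "l0 \<le> Lb"
      proof -
        define R where "R = 4 * r0 * sqrt (real DIM('a))"
        have near: "dist x0 y < R" if y: "y \<in> cube e m c0 l0" for y
        proof -
          have "y \<in> cube e m c0 (6 * l0)" using cube_mono[of l0 "6 * l0" e m c0] l0 y by auto
          then obtain x where x: "x \<in> V" "y = P x" using cover6 by auto
          then have "x \<in> {x \<in> V. P x \<in> cube e m c0 l0}" using y by auto
          then have "dist x0 x < R" using ballc unfolding R_def by (auto simp: dist_commute)
          moreover have "P x0 = x0" unfolding P_def by (rule tproj_self)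
          ultimately show ?thesis using Plip[of x0 x] x(2) by simp
        qed
        have s1: "(\<Sum>i<m. (if i = 0 then a else 0) *\<^sub>R e i) = a *\<^sub>R e 0" for a
        proof -
          have "(\<Sum>i<m. (if i = 0 then a else 0) *\<^sub>R e i) = (\<Sum>i<m. if i = 0 then a *\<^sub>R e i else 0)"
            by (intro sum.cong) auto
          also have "\<dots> = a *\<^sub>R e 0" using m0 by (subst sum.delta) auto
          finally show ?thesis .
        qed
        define y1 where "y1 = c0 + (\<Sum>i<m. (if i = 0 then l0/2 else 0) *\<^sub>R e i)"
        define y2 where "y2 = c0 + (\<Sum>i<m. (if i = 0 then - l0/2 else 0) *\<^sub>R e i)"
        have y1: "y1 \<in> cube e m c0 l0" unfolding cube_def y1_def
          by (intro CollectI exI[of _ "\<lambda>i. if i = 0 then l0/2 else 0"] conjI refl allI impI) (use l0 in auto)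
        have y2: "y2 \<in> cube e m c0 l0" unfolding cube_def y2_def
          by (intro CollectI exI[of _ "\<lambda>i. if i = 0 then - l0/2 else 0"] conjI refl allI impI) (use l0 in auto)
        have "y1 - y2 = l0 *\<^sub>R e 0" unfolding y1_def y2_def s1 by (simp add: algebra_simps flip: scaleR_add_left)
        then have "dist y1 y2 = l0" using fr.norm_e[OF m0] l0 by (simp add: dist_norm)
        then have "l0 \<le> dist x0 y1 + dist x0 y2" using dist_triangle[of y1 y2 x0] by (simp add: dist_commute)
        also have "\<dots> < R + R" using near[OF y1] near[OF y2] by simp
        also have "\<dots> \<le> Lb" unfolding R_def Lb_def using r0 by simp
        finally show ?thesis by simp
      qed
      show "\<exists>\<tau>0>0. \<forall>\<tau>. 0 < \<tau> \<and> \<tau> < \<tau>0 \<longrightarrow>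
          (\<Sum>\<^sub>\<infinity>q\<in>maximal_good_cubes e m c0 l0
                 (\<lambda>y. kappa \<mu> (n (the_inv_into (W \<inter> frontier \<Omega>) (tproj x0 (n x0)) y))
                        powr (1 / (real m / p))) \<tau>.
             ennreal (dyadic_side l0 q powr (real m + \<alpha>)))
          \<le> ennreal (C * \<tau> powr \<alpha>)"
      proof (rule exI[of _ 1], intro conjI allI impI)
        show "(0::real) < 1" by simp
        fix \<tau> :: real assume \<tau>: "0 < \<tau> \<and> \<tau> < 1"
        show "(\<Sum>\<^sub>\<infinity>q\<in>maximal_good_cubes e m c0 l0
                 (\<lambda>y. kappa \<mu> (n (the_inv_into (W \<inter> frontier \<Omega>) (tproj x0 (n x0)) y))
                        powr (1 / (real m / p))) \<tau>.
             ennreal (dyadic_side l0 q powr (real m + \<alpha>)))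
          \<le> ennreal (C * \<tau> powr \<alpha>)"
          unfolding P_def[symmetric] V_def[symmetric]
        proof (rule infsum_le_finite_sums)
          show "(\<lambda>q. ennreal (dyadic_side l0 q powr (real m + \<alpha>))) summable_on
              maximal_good_cubes e m c0 l0 (\<lambda>y. kappa \<mu> (n (the_inv_into V P y)) powr (1 / (real m / p))) \<tau>"
            by (rule nonneg_summable_on_complete) simp
          fix F assume F: "finite F" and FM: "F \<subseteq> maximal_good_cubes e m c0 l0 (\<lambda>y. kappa \<mu> (n (the_inv_into V P y)) powr (1 / (real m / p))) \<tau>"
          define Gf where "Gf = (\<lambda>y. kappa \<mu> (n (the_inv_into V P y)) powr (1 / (real m / p)))"
          have Fq: "dyadic_index m q \<and> good_cube e m c0 l0 Gf \<tau> q" if "q \<in> F" for q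
            using FM that unfolding maximal_good_cubes_def Gf_def by auto
          obtain N where N: "fst ` F \<subseteq> {..<N}" using finite_nat_bounded[OF finite_imageI[OF F]] by blast
          have "(\<Sum>q\<in>F. dyadic_side l0 q powr (real m + \<alpha>))
              = (\<Sum>k<N. (\<Sum>q\<in>{q \<in> F. fst q = k}. dyadic_side l0 q powr (real m + \<alpha>)))"
            using F N by (intro sum.group[symmetric]) auto
          also have "\<dots> \<le> (\<Sum>k<N. if l0 / 2 ^ k < \<tau> then Lb ^ m * (l0 / 2 ^ k) powr \<alpha>
                  else K2 * \<tau> ^ m * (l0 / 2 ^ k) powr (\<alpha> - real m))"
          proof (intro sum_mono)
            fix k
            show "(\<Sum>q\<in>{q \<in> F. fst q = k}. dyadic_side l0 q powr (real m + \<alpha>))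
                \<le> (if l0 / 2 ^ k < \<tau> then Lb ^ m * (l0 / 2 ^ k) powr \<alpha>
                  else K2 * \<tau> ^ m * (l0 / 2 ^ k) powr (\<alpha> - real m))"
              unfolding K2_def Kc[symmetric]
            proof (rule fr.gen_bound[OF m0 l0 _ pp _ _ cover6 inj Plip _ _ _ _ Lb, where V'="frontier \<Omega>" and kap="\<lambda>x. kappa \<mu> (n x)" and M=M])
              show "0 < \<tau>" using \<tau> by simp
              show "finite {q \<in> F. fst q = k}" using F by simp
              show "\<And>q. q \<in> {q \<in> F. fst q = k} \<Longrightarrow> dyadic_index m q \<and> fst q = k \<and> good_cube e m c0 l0 Gf \<tau> q"
                using Fq by auto
              show "\<And>y. Gf y = kappa \<mu> (n (the_inv_into V P y)) powr (1 / (real m / p))"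
                unfolding Gf_def ..
              show "\<And>x. 0 \<le> kappa \<mu> (n x)" by (rule kappa_nonneg)
              show "V \<subseteq> frontier \<Omega>" unfolding V_def by auto
              show "\<And>t. 0 < t \<Longrightarrow> ennreal (t powr p) * hausdorff_measure (real m) {x \<in> frontier \<Omega>. kappa \<mu> (n x) < 1 / t} \<le> ennreal M"
                using HM by auto
            qed
          qed
          also have "\<dots> \<le> C * \<tau> powr \<alpha>"
            unfolding C_def
          proof (rule gen_sum)
            show "0 \<le> Lb ^ m" unfolding Lb_def by simp
            show "0 \<le> K2" unfolding K2_def Kc0_def using fr.normalization_pos by simp
          qed (use \<alpha> \<tau> l0 in auto)
          finally have real: "(\<Sum>q\<in>F. dyadic_side l0 q powr (real m + \<alpha>)) \<le> C * \<tau> powr \<alpha>" .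
          have "(\<Sum>q\<in>F. ennreal (dyadic_side l0 q powr (real m + \<alpha>))) = ennreal (\<Sum>q\<in>F. dyadic_side l0 q powr (real m + \<alpha>))"
            by (rule sum_ennreal) simp
          also have "\<dots> \<le> ennreal (C * \<tau> powr \<alpha>)" using real by (rule ennreal_leI)
          finally show "(\<Sum>q\<in>F. ennreal (dyadic_side l0 q powr (real m + \<alpha>))) \<le> ennreal (C * \<tau> powr \<alpha>)" .
        qed
      qed
    qed
  qed
qed

end
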